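(* Let $n \geq d \geq 1$, let $\bar{w}\in\mathbb{R}^d$, let $\bar{\pi}$ be a permutation of $[n]$, let $x_0,x_1,\dots,x_n$ be i.i.d.\ draws from $N(0,I_d)$, and set $y_0 := \bar{w}^\top x_0$, $y_i := \bar{w}^\top x_{\bar{\pi}(i)}$ for $i\in[n]$. Let $X = [x_1|\cdots|x_n]^\top\in\mathbb{R}^{n\times d}$, let $X^\dagger = [\tilde{x}_1|\cdots|\tilde{x}_n]$ be its Moore–Penrose pseudoinverse, and let $c_{i,j} := y_i\,\tilde{x}_j^\top x_0$ for $(i,j)\in[n]\times[n]$. Then $X$ has rank $d$ almost surely, and the set $\mathcal{S}_{\bar{\pi}} := \{(i,j)\in[n]\times[n] : \bar{\pi}(i) = j\}$ satisfies $y_0 = \sum_{(i,j)\in\mathcal{S}_{\bar{\pi}}} c_{i,j}$ (almost surely). *)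

theory Defs
  imports "HOL-Probability.Probability"
begin

definition std_gaussian_density :: "real^'d \<Rightarrow> real" where
  "std_gaussian_density x = (2 * pi) powr (- real CARD('d) / 2) * exp (- (norm x)\<^sup>2 / 2)"

definition pseudoinverse :: "real^'m^'n \<Rightarrow> real^'n^'m" where
  "pseudoinverse A = (THE B. A ** B ** A = A \<and> B ** A ** B = B \<and>
      transpose (A ** B) = A ** B \<and> transpose (B ** A) = B ** A)"

end

theory Submission
  imports Defs
begin

lemma gram_inj:
  fixes X :: "real^'d^'n"
  assumes "rank X = CARD('d)"
  shows "invertible (transpose X ** X)"
proof -
  have injX: "inj ((*v) X)" using assms full_rank_injective by blast
  have "inj ((*v) (transpose X ** X))"
  proof (rule injI)
    fix u v assume h: "(transpose X ** X) *v u = (transpose X ** X) *v v"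
    let ?z = "u - v"
    have "(transpose X ** X) *v ?z = 0" using h by (simp add: matrix_vector_mult_diff_distrib)
    then have "?z \<bullet> ((transpose X ** X) *v ?z) = 0" by simp
    moreover have "?z \<bullet> ((transpose X ** X) *v ?z) = (X *v ?z) \<bullet> (X *v ?z)"
      by (metis dot_lmul_matrix matrix_vector_mul_assoc vector_transpose_matrix)
    ultimately have "X *v ?z = 0" by simp
    then show "u = v" using injX by (metis (no_types) injD matrix_vector_mult_0_right matrix_vector_mult_diff_distrib eq_iff_diff_eq_0)
  qed
  then show ?thesis
    by (simp add: invertible_left_inverse matrix_left_invertible_injective)
qed

lemma pinv_full:
  fixes X :: "real^'d^'n"
  assumes "rank X = CARD('d)"
  shows "pseudoinverse X ** X = mat 1"
proof -
  define G where "G = transpose X ** X"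
  have inv: "invertible G" using gram_inj[OF assms] G_def by simp
  then obtain Gi where GGi: "G ** Gi = mat 1" and GiG: "Gi ** G = mat 1"
    unfolding invertible_def by blast
  have symG: "transpose G = G" unfolding G_def by (simp add: matrix_transpose_mul)
  have symGi: "transpose Gi = Gi"
  proof -
    have "G ** transpose Gi = mat 1"
      by (metis GiG matrix_transpose_mul symG transpose_mat)
    then have "Gi ** (G ** transpose Gi) = Gi" by simp
    then show ?thesis by (metis GiG matrix_mul_assoc matrix_mul_lid)
  qed
  define B0 where "B0 = Gi ** transpose X"
  have B0X: "B0 ** X = mat 1" unfolding B0_def using GiG G_def by (simp add: matrix_mul_assoc)
  let ?P = "\<lambda>B. X ** B ** X = X \<and> B ** X ** B = B \<and>
      transpose (X ** B) = X ** B \<and> transpose (B ** X) = B ** X"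
  have "?P B0"
  proof (intro conjI)
    show "X ** B0 ** X = X" by (metis B0X matrix_mul_assoc matrix_mul_rid)
    show "B0 ** X ** B0 = B0" using B0X by simp
    show "transpose (X ** B0) = X ** B0" unfolding B0_def
      by (simp add: matrix_transpose_mul symGi matrix_mul_assoc)
    show "transpose (B0 ** X) = B0 ** X" using B0X by simp
  qed
  moreover have "B = B0" if "?P B" for B
  proof -
    have "transpose X = transpose (X ** B ** X)" using that by simp
    also have "\<dots> = transpose X ** transpose (X ** B)" by (simp add: matrix_transpose_mul)
    also have "\<dots> = G ** B" using that by (simp add: G_def matrix_mul_assoc)
    finally have "Gi ** transpose X = Gi ** G ** B" by (simp add: matrix_mul_assoc)
    then show ?thesis using GiG B0_def by simp
  qed
  ultimately have "pseudoinverse X = B0" unfolding pseudoinverse_def by (rule the_equality)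
  then show ?thesis using B0X by simp
qed

lemma sum_identity:
  fixes X :: "real^'d^'n" and x0 w :: "real^'d" and \<pi> :: "'n \<Rightarrow> 'n"
  assumes "rank X = CARD('d)" "bij \<pi>"
  shows "w \<bullet> x0 = (\<Sum>(i, j) \<in> {(i, j). \<pi> i = j}. (w \<bullet> X $ (\<pi> i)) * (column j (pseudoinverse X) \<bullet> x0))"
proof -
  let ?P = "pseudoinverse X"
  have PX: "?P ** X = mat 1" by (rule pinv_full[OF assms(1)])
  have "{(i, j). \<pi> i = j} = (\<lambda>i. (i, \<pi> i)) ` UNIV" by auto
  then have "(\<Sum>(i, j) \<in> {(i, j). \<pi> i = j}. (w \<bullet> X $ (\<pi> i)) * (column j ?P \<bullet> x0))
     = (\<Sum>i\<in>UNIV. (w \<bullet> X $ (\<pi> i)) * (column (\<pi> i) ?P \<bullet> x0))"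
    by (simp add: sum.reindex inj_on_def)
  also have "\<dots> = (\<Sum>j\<in>UNIV. (w \<bullet> X $ j) * (column j ?P \<bullet> x0))"
    using sum.reindex_bij_betw[of \<pi> UNIV UNIV "\<lambda>j. (w \<bullet> X $ j) * (column j ?P \<bullet> x0)"] assms(2)
    by (simp add: bij_betw_def bij_def)
  also have "\<dots> = w \<bullet> x0"
  proof -
    have "(\<Sum>j\<in>UNIV. (column j ?P \<bullet> x0) *\<^sub>R X $ j) = x0"
    proof (rule vec_eq_iff[THEN iffD2], rule allI)
      fix l
      have "(\<Sum>j\<in>UNIV. (column j ?P \<bullet> x0) *\<^sub>R X $ j) $ l
          = (\<Sum>j\<in>UNIV. (\<Sum>k\<in>UNIV. ?P $ k $ j * x0 $ k) * X $ j $ l)"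
        by (simp add: inner_vec_def column_def mult.commute)
      also have "\<dots> = (\<Sum>k\<in>UNIV. x0 $ k * (\<Sum>j\<in>UNIV. ?P $ k $ j * X $ j $ l))"
        unfolding sum_distrib_right sum_distrib_left
        by (subst sum.swap) (simp add: mult_ac)
      also have "\<dots> = (\<Sum>k\<in>UNIV. x0 $ k * (mat 1 :: real^'d^'d) $ k $ l)"
        by (simp add: PX[symmetric] matrix_matrix_mult_def)
      also have "\<dots> = (\<Sum>k\<in>UNIV. if k = l then x0 $ l else 0)"
        by (rule sum.cong) (auto simp: mat_def)
      also have "\<dots> = x0 $ l" by simp
      finally show "(\<Sum>j\<in>UNIV. (column j ?P \<bullet> x0) *\<^sub>R X $ j) $ l = x0 $ l" .
    qed
    then have "w \<bullet> x0 = w \<bullet> (\<Sum>j\<in>UNIV. (column j ?P \<bullet> x0) *\<^sub>R X $ j)" by simp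
    also have "\<dots> = (\<Sum>j\<in>UNIV. (w \<bullet> X $ j) * (column j ?P \<bullet> x0))"
      by (simp add: inner_sum_right mult.commute)
    finally show ?thesis by simp
  qed
  finally show ?thesis by simp
qed
lemma row_eq: "row i A = A $ i" by (simp add: row_def vec_eq_iff)

lemma span_rows_iff:
  fixes A :: "real^'d^'n"
  shows "u \<in> span (rows A) \<longleftrightarrow> (\<exists>c::real^'n. u = (\<Sum>i\<in>UNIV. c $ i *\<^sub>R A $ i))"
proof
  assume "u \<in> span (rows A)"
  then show "\<exists>c::real^'n. u = (\<Sum>i\<in>UNIV. c $ i *\<^sub>R A $ i)"
  proof (induction rule: span_induct)
    case (step x)
    then obtain j where j: "x = A $ j" by (auto simp: rows_def row_eq)
    show ?case
    proof (rule exI[of _ "axis j 1"])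
      have "(\<Sum>i\<in>UNIV. axis j 1 $ i *\<^sub>R A $ i) = (\<Sum>i\<in>UNIV. if i = j then A $ i else 0)"
        by (rule sum.cong) (auto simp: axis_def)
      then show "x = (\<Sum>i\<in>UNIV. axis j (1::real) $ i *\<^sub>R A $ i)" by (simp add: j)
    qed
  next
    case base
    show ?case unfolding subspace_def
    proof (intro conjI allI impI ballI)
      show "0 \<in> Collect (\<lambda>u. \<exists>c::real^'n. u = (\<Sum>i\<in>UNIV. c $ i *\<^sub>R A $ i))"
        by (auto intro!: exI[of _ 0])
    next
      fix x y assume "x \<in> Collect (\<lambda>u. \<exists>c::real^'n. u = (\<Sum>i\<in>UNIV. c $ i *\<^sub>R A $ i))"
        "y \<in> Collect (\<lambda>u. \<exists>c::real^'n. u = (\<Sum>i\<in>UNIV. c $ i *\<^sub>R A $ i))"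
      then obtain c1 c2 :: "real^'n" where "x = (\<Sum>i\<in>UNIV. c1 $ i *\<^sub>R A $ i)" "y = (\<Sum>i\<in>UNIV. c2 $ i *\<^sub>R A $ i)"
        by auto
      then show "x + y \<in> Collect (\<lambda>u. \<exists>c::real^'n. u = (\<Sum>i\<in>UNIV. c $ i *\<^sub>R A $ i))"
        by (auto intro!: exI[of _ "c1 + c2"] simp: scaleR_add_left sum.distrib)
    next
      fix r x assume "x \<in> Collect (\<lambda>u. \<exists>c::real^'n. u = (\<Sum>i\<in>UNIV. c $ i *\<^sub>R A $ i))"
      then obtain c1 :: "real^'n" where "x = (\<Sum>i\<in>UNIV. c1 $ i *\<^sub>R A $ i)" by auto
      then show "r *\<^sub>R x \<in> Collect (\<lambda>u. \<exists>c::real^'n. u = (\<Sum>i\<in>UNIV. c $ i *\<^sub>R A $ i))"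
        by (auto intro!: exI[of _ "r *\<^sub>R c1"] simp: scaleR_sum_right)
    qed
  qed
next
  assume "\<exists>c::real^'n. u = (\<Sum>i\<in>UNIV. c $ i *\<^sub>R A $ i)"
  then obtain c :: "real^'n" where u: "u = (\<Sum>i\<in>UNIV. c $ i *\<^sub>R A $ i)" by blast
  have "A $ i \<in> rows A" for i by (auto simp: rows_def row_eq)
  then show "u \<in> span (rows A)" unfolding u
    by (intro span_sum span_scale span_base)
qed

lemma S_borel:
  "{p :: (real^'d^'n) \<times> (real^'d). snd p \<in> span (rows (fst p))} \<in> sets borel"
proof -
  define g :: "(real^'d^'n) \<times> (real^'n) \<Rightarrow> (real^'d^'n) \<times> (real^'d)"
    where "g = (\<lambda>q. (fst q, \<Sum>i\<in>UNIV. snd q $ i *\<^sub>R fst q $ i))"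
  have cont: "continuous_on UNIV g" unfolding g_def
    by (intro continuous_intros)
  have eq: "{p :: (real^'d^'n) \<times> (real^'d). snd p \<in> span (rows (fst p))} = (\<Union>n::nat. g ` cball 0 (real n))"
  proof (intro set_eqI iffI)
    fix p :: "(real^'d^'n) \<times> (real^'d)"
    assume "p \<in> {p. snd p \<in> span (rows (fst p))}"
    then obtain c :: "real^'n" where c: "snd p = (\<Sum>i\<in>UNIV. c $ i *\<^sub>R fst p $ i)"
      using span_rows_iff by blast
    obtain n :: nat where "norm (fst p, c) \<le> real n" using real_arch_simple by blast
    then have "(fst p, c) \<in> cball 0 (real n)" by (simp only: mem_cball_0)
    moreover have "g (fst p, c) = p" using c by (simp add: g_def prod_eq_iff)
    ultimately show "p \<in> (\<Union>n::nat. g ` cball 0 (real n))" by force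
  next
    fix p :: "(real^'d^'n) \<times> (real^'d)"
    assume "p \<in> (\<Union>n::nat. g ` cball 0 (real n))"
    then obtain q where "p = g q" by auto
    then show "p \<in> {p. snd p \<in> span (rows (fst p))}"
      using span_rows_iff by (auto simp: g_def)
  qed
  have "g ` cball 0 (real n) \<in> sets borel" for n :: nat
  proof -
    have "compact (g ` cball 0 (real n))"
      by (rule compact_continuous_image) (auto intro: continuous_on_subset[OF cont])
    then show ?thesis by (intro borel_closed compact_imp_closed)
  qed
  then show ?thesis unfolding eq by auto
qed

lemma null_lowdim:
  fixes T :: "(real^'d) set"
  assumes "dim T < CARD('d)"
  shows "span T \<in> null_sets lborel"
proof -
  have b: "span T \<in> sets borel" by (intro borel_closed closed_subspace subspace_span)
  have "negligible (span T)" using assms by (intro negligible_lowdim) (simp add: dim_span)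
  then have "span T \<in> null_sets lebesgue" by (simp add: negligible_iff_null_sets)
  then show ?thesis using b by (simp add: null_sets_completion_iff)
qed

lemma gauss_meas: "std_gaussian_density \<in> borel_measurable borel"
  unfolding std_gaussian_density_def[abs_def] by measurable

lemma (in prob_space) key:
  fixes x :: "'n::finite option \<Rightarrow> 'a \<Rightarrow> real^'d::finite"
  assumes ind: "indep_vars (\<lambda>_. borel) x UNIV"
    and dist: "\<And>i. distributed M lborel (x i) (\<lambda>v. ennreal (std_gaussian_density v))"
    and aI: "a \<notin> I" and card: "card I < CARD('d)"
  shows "AE \<omega> in M. x (Some a) \<omega> \<notin> span ((\<lambda>i. x (Some i) \<omega>) ` I)"
proof -
  define Y :: "'a \<Rightarrow> real^'d^'n" where "Y \<omega> = (\<Sum>i\<in>I. axis i (x (Some i) \<omega>))" for \<omega>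
  define xa :: "'a \<Rightarrow> real^'d^'n" where "xa \<omega> = axis a (x (Some a) \<omega>)" for \<omega>
  have xm: "x i \<in> borel_measurable M" for i
    using ind by (auto simp: indep_vars_def)
  have Ycomp: "Y \<omega> $ j = (if j \<in> I then x (Some j) \<omega> else 0)" for \<omega> j
    by (simp add: Y_def axis_def if_distrib cong: if_cong)
  have spanY: "span (rows (Y \<omega>)) = span ((\<lambda>i. x (Some i) \<omega>) ` I)" for \<omega>
  proof (rule span_eq[THEN iffD2], intro conjI subsetI)
    fix u assume "u \<in> rows (Y \<omega>)"
    then obtain j where "u = Y \<omega> $ j" by (auto simp: rows_def row_eq)
    then show "u \<in> span ((\<lambda>i. x (Some i) \<omega>) ` I)"
      by (auto simp: Ycomp span_base span_zero)
  next
    fix u assume "u \<in> (\<lambda>i. x (Some i) \<omega>) ` I"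
    then obtain j where "j \<in> I" "u = x (Some j) \<omega>" by auto
    then have "u = Y \<omega> $ j" by (simp add: Ycomp)
    then show "u \<in> span (rows (Y \<omega>))" by (auto simp: rows_def row_eq intro!: span_base)
  qed
  have iv: "indep_var (PiM (Some ` I) (\<lambda>_. borel)) (\<lambda>\<omega>. restrict (\<lambda>i. x i \<omega>) (Some ` I))
      (PiM {Some a} (\<lambda>_. borel)) (\<lambda>\<omega>. restrict (\<lambda>i. x i \<omega>) {Some a})"
    using aI by (intro indep_var_restrict[OF ind]) auto
  define h1 :: "('n option \<Rightarrow> real^'d) \<Rightarrow> real^'d^'n" where "h1 f = (\<Sum>i\<in>I. axis i (f (Some i)))" for f
  define h2 :: "('n option \<Rightarrow> real^'d) \<Rightarrow> real^'d^'n" where "h2 f = axis a (f (Some a))" for f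
  have axm: "axis i \<in> borel_measurable (borel :: (real^'d) measure)" for i :: 'n
  proof -
    have "linear (axis i :: real^'d \<Rightarrow> real^'d^'n)"
      by (auto simp: linear_iff axis_def vec_eq_iff)
    then show ?thesis by (intro borel_measurable_continuous_onI linear_continuous_on linear_conv_bounded_linear[THEN iffD1])
  qed
  have h1m: "h1 \<in> measurable (PiM (Some ` I) (\<lambda>_. borel)) borel"
    unfolding h1_def using axm by measurable
  have h2m: "h2 \<in> measurable (PiM {Some a} (\<lambda>_. borel)) borel"
    unfolding h2_def using axm by measurable
  have "indep_var borel (h1 \<circ> (\<lambda>\<omega>. restrict (\<lambda>i. x i \<omega>) (Some ` I))) borel (h2 \<circ> (\<lambda>\<omega>. restrict (\<lambda>i. x i \<omega>) {Some a}))"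
    by (rule indep_var_compose[OF iv h1m h2m])
  moreover have "h1 \<circ> (\<lambda>\<omega>. restrict (\<lambda>i. x i \<omega>) (Some ` I)) = Y"
    by (auto simp: h1_def Y_def fun_eq_iff intro!: sum.cong)
  moreover have "h2 \<circ> (\<lambda>\<omega>. restrict (\<lambda>i. x i \<omega>) {Some a}) = xa"
    by (auto simp: h2_def xa_def fun_eq_iff)
  ultimately have ivY: "indep_var borel Y borel xa" by simp
  then have rvY: "random_variable borel Y" and rvx: "random_variable borel xa"
    and prod: "distr M borel Y \<Otimes>\<^sub>M distr M borel xa = distr M (borel \<Otimes>\<^sub>M borel) (\<lambda>\<omega>. (Y \<omega>, xa \<omega>))"
    using indep_var_distribution_eq by blast+
  define S where "S = {p :: (real^'d^'n) \<times> (real^'d^'n). snd p $ a \<in> span (rows (fst p))}"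
  have Sb: "S \<in> sets (borel \<Otimes>\<^sub>M borel)"
  proof -
    have "(\<lambda>p :: (real^'d^'n) \<times> (real^'d^'n). (fst p, snd p $ a)) \<in> borel_measurable borel"
      by (intro borel_measurable_continuous_onI continuous_intros)
    then have "(\<lambda>p :: (real^'d^'n) \<times> (real^'d^'n). (fst p, snd p $ a)) -` {p :: (real^'d^'n) \<times> (real^'d). snd p \<in> span (rows (fst p))} \<inter> space borel \<in> sets borel"
      using S_borel by (rule measurable_sets)
    then show ?thesis unfolding borel_prod S_def by (simp add: vimage_def)
  qed
  interpret Da: prob_space "distr M borel xa" by (rule prob_space_distr[OF rvx])
  have pm: "(\<lambda>\<omega>. (Y \<omega>, xa \<omega>)) \<in> measurable M (borel \<Otimes>\<^sub>M borel)"
    using rvY rvx by (rule measurable_Pair)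
  define N where "N = {\<omega> \<in> space M. (Y \<omega>, xa \<omega>) \<in> S}"
  have "emeasure M N = emeasure (distr M (borel \<Otimes>\<^sub>M borel) (\<lambda>\<omega>. (Y \<omega>, xa \<omega>))) S"
    using Sb pm by (simp add: emeasure_distr N_def vimage_def Int_def conj_commute)
  also have "\<dots> = (\<integral>\<^sup>+A. emeasure (distr M borel xa) (Pair A -` S) \<partial>distr M borel Y)"
    using Sb by (simp add: prod[symmetric] Da.emeasure_pair_measure_alt)
  also have "\<dots> = (\<integral>\<^sup>+\<omega>. emeasure (distr M borel xa) (Pair (Y \<omega>) -` S) \<partial>M)"
    using Sb rvY by (intro nn_integral_distr Da.measurable_emeasure_Pair) auto
  also have "\<dots> = (\<integral>\<^sup>+\<omega>. 0 \<partial>M)"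
  proof (rule nn_integral_cong)
    fix \<omega> assume "\<omega> \<in> space M"
    let ?T = "span ((\<lambda>i. x (Some i) \<omega>) ` I)"
    have "dim ((\<lambda>i. x (Some i) \<omega>) ` I) \<le> card ((\<lambda>i. x (Some i) \<omega>) ` I)"
      by (intro dim_le_card span_superset) auto
    also have "\<dots> \<le> card I" by (rule card_image_le) simp
    finally have nl: "?T \<in> null_sets lborel" using card by (intro null_lowdim) simp
    have Tb: "?T \<in> sets borel" using nl by auto
    have fm: "(\<lambda>v. ennreal (std_gaussian_density v)) \<in> borel_measurable lborel"
      using gauss_meas by measurable
    have nd: "?T \<in> null_sets (density lborel (\<lambda>v. ennreal (std_gaussian_density v)))"
    proof -
      have "AE v in lborel. v \<notin> ?T" by (rule AE_not_in[OF nl])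
      then have "AE v in lborel. v \<in> ?T \<longrightarrow> ennreal (std_gaussian_density v) = 0"
        by eventually_elim auto
      then show ?thesis using nl by (subst null_sets_density_iff[OF fm]) auto
    qed
    have pre: "Pair (Y \<omega>) -` S = (\<lambda>B. B $ a) -` ?T" by (simp add: S_def spanY vimage_def)
    have "emeasure (distr M borel xa) (Pair (Y \<omega>) -` S) = emeasure M (xa -` ((\<lambda>B. B $ a) -` ?T) \<inter> space M)"
    proof -
      have "(\<lambda>B::real^'d^'n. B $ a) \<in> borel_measurable borel"
        by (intro borel_measurable_continuous_onI continuous_intros)
      from measurable_sets[OF this Tb] have "(\<lambda>B::real^'d^'n. B $ a) -` ?T \<in> sets borel" by simp
      then show ?thesis unfolding pre by (intro emeasure_distr rvx)
    qed
    also have "\<dots> = emeasure M (x (Some a) -` ?T \<inter> space M)"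
      by (simp add: xa_def vimage_def)
    also have "\<dots> = emeasure (distr M lborel (x (Some a))) ?T"
      using Tb xm[of "Some a"] by (intro emeasure_distr[symmetric]) auto
    also have "\<dots> = emeasure (density lborel (\<lambda>v. ennreal (std_gaussian_density v))) ?T"
      using dist[of "Some a"] by (simp add: distributed_def)
    also have "\<dots> = 0" using nd by auto
    finally show "emeasure (distr M borel xa) (Pair (Y \<omega>) -` S) = 0" .
  qed
  also have "\<dots> = 0" by simp
  finally have "N \<in> null_sets M" using Sb pm by (auto simp: N_def null_sets_def)
  then show ?thesis
    by (rule AE_I') (auto simp: N_def S_def spanY xa_def)
qed


lemma (in prob_space) ae_dim:
  fixes x :: "'n::finite option \<Rightarrow> 'a \<Rightarrow> real^'d::finite"
  assumes ind: "indep_vars (\<lambda>_. borel) x UNIV"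
    and dist: "\<And>i. distributed M lborel (x i) (\<lambda>v. ennreal (std_gaussian_density v))"
  shows "finite I \<Longrightarrow> card I \<le> CARD('d) \<Longrightarrow> AE \<omega> in M. dim ((\<lambda>i. x (Some i) \<omega>) ` I) = card I"
proof (induction I rule: finite_induct)
  case empty
  then show ?case by simp
next
  case (insert a I)
  then have c: "card I < CARD('d)" by simp
  have "AE \<omega> in M. dim ((\<lambda>i. x (Some i) \<omega>) ` I) = card I" using insert c by simp
  moreover have "AE \<omega> in M. x (Some a) \<omega> \<notin> span ((\<lambda>i. x (Some i) \<omega>) ` I)"
    using key[OF ind dist insert(2) c] .
  ultimately show ?case
  proof eventually_elim
    case (elim \<omega>)
    then show ?case using insert(1,2) by (simp add: dim_insert)
  qed
qed

lemma (in prob_space) ae_rank: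
  fixes x :: "'n::finite option \<Rightarrow> 'a \<Rightarrow> real^'d::finite"
  assumes ind: "indep_vars (\<lambda>_. borel) x UNIV"
    and dist: "\<And>i. distributed M lborel (x i) (\<lambda>v. ennreal (std_gaussian_density v))"
    and dn: "CARD('d) \<le> CARD('n)"
  shows "AE \<omega> in M. rank ((\<chi> i. x (Some i) \<omega>) :: real^'d^'n) = CARD('d)"
proof -
  obtain I :: "'n set" where I: "card I = CARD('d)" "finite I"
    using obtain_subset_with_card_n[OF dn] by metis
  have "AE \<omega> in M. dim ((\<lambda>i. x (Some i) \<omega>) ` I) = card I"
    using ae_dim[OF ind dist I(2)] I by simp
  then show ?thesis
  proof eventually_elim
    case (elim \<omega>)
    let ?X = "(\<chi> i. x (Some i) \<omega>) :: real^'d^'n"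
    have rows: "rows ?X = range (\<lambda>i. x (Some i) \<omega>)"
      by (auto simp: rows_def row_eq)
    have "CARD('d) = dim ((\<lambda>i. x (Some i) \<omega>) ` I)" using elim I by simp
    also have "\<dots> \<le> dim (rows ?X)" unfolding rows by (intro dim_subset) auto
    also have "\<dots> = rank ?X" by (simp add: row_rank_def)
    finally show ?case using rank_bound[of ?X] by simp
  qed
qed

theorem mainTheorem2:
  fixes M :: "'a measure"
    and x :: "'n::finite option \<Rightarrow> 'a \<Rightarrow> real^'d::finite"
    and w :: "real^'d"
    and \<pi> :: "'n \<Rightarrow> 'n"
  assumes "prob_space M"
    and "CARD('d) \<le> CARD('n)"
    and "bij \<pi>"
    and "prob_space.indep_vars M (\<lambda>_. borel) x UNIV"
    and "\<And>i. distributed M lborel (x i) (\<lambda>v. ennreal (std_gaussian_density v))"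
  shows "AE \<omega> in M.
     (let x0 = x None \<omega>;
          X = (\<chi> i. x (Some i) \<omega>) :: real^'d^'n;
          y0 = w \<bullet> x0;
          y = (\<lambda>i. w \<bullet> x (Some (\<pi> i)) \<omega>);
          c = (\<lambda>i j. y i * (column j (pseudoinverse X) \<bullet> x0))
      in rank X = CARD('d) \<and> y0 = (\<Sum>(i, j) \<in> {(i, j). \<pi> i = j}. c i j))"
proof -
  interpret prob_space M by fact
  have "AE \<omega> in M. rank ((\<chi> i. x (Some i) \<omega>) :: real^'d^'n) = CARD('d)"
    using ae_rank[OF assms(4,5,2)] .
  then show ?thesis
  proof eventually_elim
    case (elim \<omega>)
    let ?X = "(\<chi> i. x (Some i) \<omega>) :: real^'d^'n"
    have "w \<bullet> x None \<omega> = (\<Sum>(i, j) \<in> {(i, j). \<pi> i = j}. (w \<bullet> ?X $ (\<pi> i)) * (column j (pseudoinverse ?X) \<bullet> x None \<omega>))"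
      by (rule sum_identity[OF elim assms(3)])
    then show ?case using elim by (simp add: Let_def)
  qed
qed

end
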